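(* Let $a>0$, $\theta\in(0,\pi/2)$ and $\theta_0\in[\theta,\pi/2)$. For all $w\in\mathbb{C}$ with $w\neq0$ and $-\theta_0+\theta\le\mathrm{Arg}(w)\le\theta_0$, and all $s\in\mathbb{R}$, $$|R(w,\tau_\theta(s)-a)|^2\ge\cos(\theta_0)\big(|w|^2+|\tau_\theta(s)-a|^2\big)\ge\cos^2(\theta_0)\big(|w|^2+|\tau_\theta(s)-a|^2\big).$$ Further, there exists $C>0$ depending only on $a$ and $\theta$ such that, for all $s\in\mathbb{R}$ and all $w\neq0$ with $0\le\mathrm{Arg}(w)\le\theta$, $$\Im\big(R(w,\tau_\theta(s)-a)\big)\ge[\cos(\theta-\mathrm{Arg}(w))]^{1/2}\Im(w)-C\ge\cos(\theta-\mathrm{Arg}(w))\Im(w)-C.$$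
   Context: Square roots are principal ($\sqrt z=|z|^{1/2}e^{i\mathrm{Arg}(z)/2}$, $\mathrm{Arg}(z)\in(-\pi,\pi]$) and $R(\hat z,z)=(\hat z^2+z^2)^{1/2}$ for $\hat z,z\in\mathbb{C}$. $\tau_\theta(s)=-a+(s+a)e^{i\theta}$ for $s<-a$, $s$ for $|s|\le a$, $a+(s-a)e^{i\theta}$ for $s>a$. *)

theory Defs
  imports "HOL-Analysis.Analysis"
begin

text \<open>Principal square root: csqrt is the principal branch (Arg in (-pi,pi]).\<close>
definition R :: "complex \<Rightarrow> complex \<Rightarrow> complex" where
  "R zh z = csqrt (zh\<^sup>2 + z\<^sup>2)"

definition tau :: "real \<Rightarrow> real \<Rightarrow> real \<Rightarrow> complex" where
  "tau a \<theta> s =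
     (if s < -a then - complex_of_real a + complex_of_real (s + a) * exp (\<i> * complex_of_real \<theta>)
      else if s \<le> a then complex_of_real s
      else complex_of_real a + complex_of_real (s - a) * exp (\<i> * complex_of_real \<theta>))"

end

theory Submission
  imports Defs
begin


lemma Im_csqrt_nonneg: "Im z \<ge> 0 \<Longrightarrow> Im (csqrt z) \<ge> 0"
  using complex_Re_le_cmod[of z] by (auto simp: sgn_if)

lemma pert:
  assumes "Im x \<ge> 0" "Im y \<ge> 0"
  shows "(cmod (csqrt x - csqrt y))\<^sup>2 \<le> cmod (x - y)"
    and "cmod (csqrt x - csqrt y) * cmod (csqrt y) \<le> cmod (x - y)"
proof -
  define a where "a = csqrt x"
  define b where "b = csqrt y"
  have a1: "Re a \<ge> 0" "Im a \<ge> 0" using Re_csqrt Im_csqrt_nonneg assms a_def by auto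
  have b1: "Re b \<ge> 0" "Im b \<ge> 0" using Re_csqrt Im_csqrt_nonneg assms b_def by auto
  have xy: "x - y = (a - b) * (a + b)"
    by (simp add: a_def b_def algebra_simps power2_eq_square[symmetric])
  have p: "Re a * Re b + Im a * Im b \<ge> 0" using a1 b1 by simp
  have "(cmod (a - b))\<^sup>2 \<le> (cmod (a + b))\<^sup>2"
    unfolding cmod_power2 using p by (simp add: power2_eq_square algebra_simps)
  hence 1: "cmod (a - b) \<le> cmod (a + b)" by (rule power2_le_imp_le) simp
  have "(cmod b)\<^sup>2 \<le> (cmod (a + b))\<^sup>2"
    unfolding cmod_power2 using p a1 b1 by (simp add: power2_eq_square algebra_simps)
  hence 2: "cmod b \<le> cmod (a + b)" by (rule power2_le_imp_le) simp
  have e: "cmod (x - y) = cmod (a - b) * cmod (a + b)" by (simp add: xy norm_mult)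
  show "(cmod (csqrt x - csqrt y))\<^sup>2 \<le> cmod (x - y)"
    unfolding e a_def[symmetric] b_def[symmetric] power2_eq_square
    using 1 by (simp add: mult_left_mono)
  show "cmod (csqrt x - csqrt y) * cmod (csqrt y) \<le> cmod (x - y)"
    unfolding e a_def[symmetric] b_def[symmetric]
    using 2 by (simp add: mult_left_mono)
qed

lemma re_term:
  assumes "c \<ge> 0" "\<bar>\<alpha> - \<mu>\<bar> \<le> b" "b \<le> pi"
  shows "cos b * c \<le> Re (cis (-\<mu>) * (complex_of_real c * cis \<alpha>))"
proof -
  have e: "Re (cis (-\<mu>) * (complex_of_real c * cis \<alpha>)) = c * cos (\<alpha> - \<mu>)"
    by (simp add: cos_diff algebra_simps)
  have "cos b \<le> cos \<bar>\<alpha> - \<mu>\<bar>"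
    using assms by (subst cos_mono_le_eq) auto
  hence "cos b \<le> cos (\<alpha> - \<mu>)" by simp
  thus ?thesis unfolding e using assms(1) by (simp add: mult_left_mono mult.commute)
qed

lemma cmod_ge_Re_rot: "Re (cis (-\<mu>) * u) \<le> cmod u"
  using complex_Re_le_cmod[of "cis (-\<mu>) * u"] by (simp add: norm_mult)

lemma w_sq: "w\<^sup>2 = complex_of_real ((cmod w)\<^sup>2) * cis (2 * Arg w)"
proof -
  have "w = complex_of_real (cmod w) * cis (Arg w)"
    using rcis_cmod_Arg[of w] by (simp add: rcis_def)
  hence "w\<^sup>2 = (complex_of_real (cmod w) * cis (Arg w))\<^sup>2" by simp
  also have "\<dots> = complex_of_real ((cmod w)\<^sup>2) * cis (Arg w) ^ 2"
    by (simp add: power_mult_distrib)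
  also have "cis (Arg w) ^ 2 = cis (2 * Arg w)" using Complex.DeMoivre[of "Arg w" 2] by simp
  finally show ?thesis .
qed

lemma Im_w: "Im w = cmod w * sin (Arg w)"
proof -
  have "w = complex_of_real (cmod w) * cis (Arg w)"
    using rcis_cmod_Arg[of w] by (simp add: rcis_def)
  hence "Im w = Im (complex_of_real (cmod w) * cis (Arg w))" by simp
  thus ?thesis by simp
qed


lemma cis_sq: "(cis x)\<^sup>2 = cis (2 * x)"
  using Complex.DeMoivre[of x 2] by simp

lemma zsq:
  assumes "a > 0"
  shows "\<exists>p q r t. p \<ge> 0 \<and> q \<ge> 0 \<and> r \<ge> 0 \<and> t \<ge> 0 \<and>
     (tau a \<theta> s - complex_of_real a)\<^sup>2 = complex_of_real p + complex_of_real q * cis \<theta> + complex_of_real r * cis (2 * \<theta>)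
     \<and> (cmod (tau a \<theta> s - complex_of_real a))\<^sup>2 \<le> p + q + r
     \<and> cmod ((tau a \<theta> s - complex_of_real a)\<^sup>2 - complex_of_real (t\<^sup>2) * cis (2 * \<theta>)) \<le> 4 * a\<^sup>2 + 4 * a * t"
proof (cases "s < -a")
  case True
  define t where "t = -(s + a)"
  have t0: "t \<ge> 0" using True t_def by simp
  have z: "tau a \<theta> s - complex_of_real a = - (complex_of_real (2*a) + complex_of_real t * cis \<theta>)"
    using True by (simp add: tau_def t_def cis_conv_exp algebra_simps)
  have zz: "(tau a \<theta> s - complex_of_real a)\<^sup>2 = complex_of_real (4*a\<^sup>2) + complex_of_real (4*a*t) * cis \<theta> + complex_of_real (t\<^sup>2) * cis (2 * \<theta>)"
    unfolding z cis_sq[symmetric] by (simp add: power2_eq_square algebra_simps)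
  have "cmod (tau a \<theta> s - complex_of_real a) \<le> 2*a + t"
    unfolding z norm_minus_cancel using norm_triangle_ineq[of "complex_of_real (2*a)" "complex_of_real t * cis \<theta>"]
      assms t0 by (simp add: norm_mult)
  hence "(cmod (tau a \<theta> s - complex_of_real a))\<^sup>2 \<le> (2*a+t)\<^sup>2"
    by (intro power_mono) auto
  also have "\<dots> = 4*a\<^sup>2 + 4*a*t + t\<^sup>2" by (simp add: power2_eq_square algebra_simps)
  finally have m: "(cmod (tau a \<theta> s - complex_of_real a))\<^sup>2 \<le> 4*a\<^sup>2 + 4*a*t + t\<^sup>2" .
  have "cmod ((tau a \<theta> s - complex_of_real a)\<^sup>2 - complex_of_real (t\<^sup>2) * cis (2 * \<theta>))
      = cmod (complex_of_real (4*a\<^sup>2) + complex_of_real (4*a*t) * cis \<theta>)" unfolding zz by simp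
  also have "\<dots> \<le> cmod (complex_of_real (4*a\<^sup>2)) + cmod (complex_of_real (4*a*t) * cis \<theta>)"
    by (rule norm_triangle_ineq)
  also have "\<dots> = 4*a\<^sup>2 + 4*a*t" using assms t0 by (simp only: norm_of_real norm_mult norm_cis) simp
  finally have d: "cmod ((tau a \<theta> s - complex_of_real a)\<^sup>2 - complex_of_real (t\<^sup>2) * cis (2 * \<theta>)) \<le> 4*a\<^sup>2 + 4*a*t" .
  show ?thesis
    apply (rule exI[of _ "4*a\<^sup>2"], rule exI[of _ "4*a*t"], rule exI[of _ "t\<^sup>2"], rule exI[of _ t])
    apply (intro conjI)
    using assms t0 zz m d by simp_all
next
  case F: False
  show ?thesis
  proof (cases "s \<le> a")
    case True
    have z: "tau a \<theta> s - complex_of_real a = complex_of_real (s - a)"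
      using True F by (simp add: tau_def)
    have zz: "(tau a \<theta> s - complex_of_real a)\<^sup>2 = complex_of_real ((s-a)\<^sup>2) + complex_of_real 0 * cis \<theta> + complex_of_real 0 * cis (2 * \<theta>)"
      unfolding z by simp
    have "\<bar>s-a\<bar> \<le> \<bar>2*a\<bar>" using True F assms by simp
    hence "(s-a)\<^sup>2 \<le> (2*a)\<^sup>2" by (simp only: abs_le_square_iff)
    hence d: "cmod ((tau a \<theta> s - complex_of_real a)\<^sup>2 - complex_of_real (0\<^sup>2) * cis (2 * \<theta>)) \<le> 4*a\<^sup>2 + 4*a*0"
    proof -
      have "(tau a \<theta> s - complex_of_real a)\<^sup>2 - complex_of_real (0\<^sup>2) * cis (2 * \<theta>) = complex_of_real ((s-a)\<^sup>2)"
        unfolding z by simp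
      hence "cmod ((tau a \<theta> s - complex_of_real a)\<^sup>2 - complex_of_real (0\<^sup>2) * cis (2 * \<theta>)) = (s-a)\<^sup>2"
        by (simp only: norm_of_real) simp
      thus ?thesis using \<open>(s-a)\<^sup>2 \<le> (2*a)\<^sup>2\<close> by (simp add: power_mult_distrib)
    qed
    have m: "(cmod (tau a \<theta> s - complex_of_real a))\<^sup>2 \<le> (s-a)\<^sup>2 + 0 + 0" unfolding z by (simp only: norm_of_real) simp
    show ?thesis
      apply (rule exI[of _ "(s-a)\<^sup>2"], rule exI[of _ 0], rule exI[of _ 0], rule exI[of _ 0])
      apply (intro conjI)
      using zz d m by simp_all
  next
    case False
    have z: "tau a \<theta> s - complex_of_real a = complex_of_real (s - a) * cis \<theta>"
      using False F by (simp add: tau_def cis_conv_exp)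
    have zz: "(tau a \<theta> s - complex_of_real a)\<^sup>2 = complex_of_real 0 + complex_of_real 0 * cis \<theta> + complex_of_real ((s-a)\<^sup>2) * cis (2 * \<theta>)"
      unfolding z cis_sq[symmetric] by (simp add: power_mult_distrib)
    have d: "cmod ((tau a \<theta> s - complex_of_real a)\<^sup>2 - complex_of_real ((s-a)\<^sup>2) * cis (2 * \<theta>)) \<le> 4*a\<^sup>2 + 4*a*(s-a)"
      using zz False assms by simp
    have m: "(cmod (tau a \<theta> s - complex_of_real a))\<^sup>2 \<le> 0 + 0 + (s-a)\<^sup>2" unfolding z by (simp only: norm_mult norm_of_real norm_cis) simp
    show ?thesis
      apply (rule exI[of _ 0], rule exI[of _ 0], rule exI[of _ "(s-a)\<^sup>2"], rule exI[of _ "s-a"])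
      apply (intro conjI)
      using zz d m False by simp_all
  qed
qed


lemma L1:
  assumes w: "w \<noteq> 0" and p0: "0 \<le> Arg w" and p1: "Arg w \<le> \<theta>" and th: "\<theta> < pi/2" and t0: "t \<ge> 0"
  defines "y0 \<equiv> w\<^sup>2 + complex_of_real (t\<^sup>2) * cis (2 * \<theta>)"
  shows "Im y0 \<ge> 0" "cmod y0 \<ge> cos (\<theta> - Arg w) * ((cmod w)\<^sup>2 + t\<^sup>2)"
    "Im (csqrt y0) \<ge> sqrt (cos (\<theta> - Arg w)) * Im w"
proof -
  define \<phi> where "\<phi> = Arg w"
  define r where "r = cmod w"
  have r0: "r > 0" using w r_def by simp
  have y: "y0 = complex_of_real (r\<^sup>2) * cis (2*\<phi>) + complex_of_real (t\<^sup>2) * cis (2 * \<theta>)"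
    unfolding y0_def r_def \<phi>_def using w_sq[of w] by simp
  have s1: "sin (2*\<phi>) \<ge> 0" using p0 p1 th \<phi>_def by (intro sin_ge_zero) auto
  have s2: "sin (2*\<theta>) \<ge> 0" using p0 p1 th \<phi>_def by (intro sin_ge_zero) auto
  show "Im y0 \<ge> 0" unfolding y using s1 s2 by simp
  hence imv: "Im (csqrt y0) \<ge> 0" by (rule Im_csqrt_nonneg)
  have "cos (\<theta> - \<phi>) * (r\<^sup>2 + t\<^sup>2) = cos (\<theta> - \<phi>) * r\<^sup>2 + cos (\<theta> - \<phi>) * t\<^sup>2" by (simp add: algebra_simps)
  also have "\<dots> \<le> Re (cis (-(\<phi>+\<theta>)) * (complex_of_real (r\<^sup>2) * cis (2*\<phi>))) + Re (cis (-(\<phi>+\<theta>)) * (complex_of_real (t\<^sup>2) * cis (2*\<theta>)))"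
    apply (intro add_mono re_term) using p0 p1 th \<phi>_def by auto
  also have "\<dots> = Re (cis (-(\<phi>+\<theta>)) * y0)" unfolding y by (simp add: algebra_simps)
  also have "\<dots> \<le> cmod y0" by (rule cmod_ge_Re_rot)
  finally have my: "cos (\<theta> - \<phi>) * (r\<^sup>2 + t\<^sup>2) \<le> cmod y0" .
  thus "cmod y0 \<ge> cos (\<theta> - Arg w) * ((cmod w)\<^sup>2 + t\<^sup>2)" unfolding r_def \<phi>_def .
  define v where "v = csqrt y0"
  have rv: "Re v \<ge> 0" unfolding v_def by (rule Re_csqrt)
  have iv: "Im v \<ge> 0" unfolding v_def by (rule imv)
  have cp: "cos \<phi> > 0" using p0 p1 th \<phi>_def by (intro cos_gt_zero_pi) auto
  have sp: "sin \<phi> \<ge> 0" using p0 p1 th \<phi>_def by (intro sin_ge_zero) auto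
  define X where "X = Re v * cos \<phi> + Im v * sin \<phi>"
  define Y where "Y = Im v * cos \<phi> - Re v * sin \<phi>"
  have X0: "X \<ge> 0" unfolding X_def using rv iv cp sp by simp
  have q: "v * cis (-\<phi>) = Complex X Y" unfolding X_def Y_def by (simp add: complex_eq_iff)
  have "(v * cis (-\<phi>))\<^sup>2 = y0 * cis (-(2*\<phi>))"
    by (simp add: power_mult_distrib v_def cis_sq)
  also have "\<dots> = complex_of_real (r\<^sup>2) + complex_of_real (t\<^sup>2) * cis (2*\<theta> - 2*\<phi>)"
    unfolding y distrib_right mult.assoc cis_mult by simp
  finally have "Im ((Complex X Y)\<^sup>2) = t\<^sup>2 * sin (2*\<theta> - 2*\<phi>)" unfolding q by simp
  moreover have "sin (2*\<theta> - 2*\<phi>) \<ge> 0" using p0 p1 th \<phi>_def by (intro sin_ge_zero) auto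
  ultimately have XY0: "2 * (X * Y) = t * t * sin (2*\<theta> - 2*\<phi>)" "sin (2*\<theta> - 2*\<phi>) \<ge> 0" by (simp_all add: power2_eq_square)
  have "t * t * sin (2*\<theta> - 2*\<phi>) \<ge> 0" using XY0(2) by simp
  hence XY: "X * Y \<ge> 0" using XY0(1) by linarith
  have Y0: "Y \<ge> 0"
  proof (cases "X > 0")
    case True thus ?thesis using XY by (simp add: zero_le_mult_iff)
  next
    case False
    hence "X = 0" using X0 by simp
    moreover have "Re v * cos \<phi> \<ge> 0" "Im v * sin \<phi> \<ge> 0" using rv iv cp sp by simp_all
    ultimately have "Re v * cos \<phi> = 0" unfolding X_def by linarith
    hence "Re v = 0" using cp by simp
    thus ?thesis unfolding Y_def using iv cp by simp
  qed
  hence "Re v * sin \<phi> \<le> Im v * cos \<phi>" unfolding Y_def by simp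
  hence "(Re v * sin \<phi>)\<^sup>2 \<le> (Im v * cos \<phi>)\<^sup>2" using rv sp by (intro power_mono) auto
  hence h: "(Re v)\<^sup>2 * (sin \<phi>)\<^sup>2 \<le> (Im v)\<^sup>2 * (cos \<phi>)\<^sup>2" by (simp add: power_mult_distrib)
  have "(cmod v * sin \<phi>)\<^sup>2 = (Re v)\<^sup>2 * (sin \<phi>)\<^sup>2 + (Im v)\<^sup>2 * (sin \<phi>)\<^sup>2"
    unfolding power_mult_distrib cmod_power2 by (simp add: distrib_right)
  also have "\<dots> \<le> (Im v)\<^sup>2 * (cos \<phi>)\<^sup>2 + (Im v)\<^sup>2 * (sin \<phi>)\<^sup>2" using h by simp
  also have "\<dots> = (Im v)\<^sup>2" using sin_cos_squared_add[of \<phi>] by (simp add: distrib_left[symmetric])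
  finally have "(cmod v * sin \<phi>)\<^sup>2 \<le> (Im v)\<^sup>2" .
  hence im1: "cmod v * sin \<phi> \<le> Im v" using iv by (rule power2_le_imp_le)
  have cd: "cos (\<theta> - \<phi>) \<ge> 0" using p0 p1 th \<phi>_def by (intro cos_ge_zero) auto
  have "sqrt (cos (\<theta> - \<phi>)) * r = sqrt (cos (\<theta> - \<phi>) * r\<^sup>2)" using r0 by (simp add: real_sqrt_mult)
  also have "\<dots> \<le> sqrt (cmod y0)" using my cd t0
    by (intro real_sqrt_le_mono order.trans[OF _ my] mult_left_mono) auto
  also have "\<dots> = cmod v" unfolding v_def by simp
  finally have "sqrt (cos (\<theta> - \<phi>)) * r \<le> cmod v" .
  hence "sqrt (cos (\<theta> - \<phi>)) * r * sin \<phi> \<le> cmod v * sin \<phi>" using sp by (rule mult_right_mono)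
  also have "\<dots> \<le> Im v" by (rule im1)
  finally have fin: "sqrt (cos (\<theta> - \<phi>)) * r * sin \<phi> \<le> Im v" .
  have iw: "Im w = r * sin \<phi>" unfolding r_def \<phi>_def by (rule Im_w)
  show "Im (csqrt y0) \<ge> sqrt (cos (\<theta> - Arg w)) * Im w"
    using fin unfolding iw v_def \<phi>_def[symmetric] mult.assoc .
qed


lemma part1:
  assumes "a > 0" and "0 < \<theta>" and "\<theta> < pi / 2"
    and "\<theta> \<le> \<theta>\<^sub>0" and "\<theta>\<^sub>0 < pi / 2"
    and w: "w \<noteq> 0" and f1: "- \<theta>\<^sub>0 + \<theta> \<le> Arg w" and f2: "Arg w \<le> \<theta>\<^sub>0"
  shows "(cmod (R w (tau a \<theta> s - complex_of_real a)))\<^sup>2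
              \<ge> cos \<theta>\<^sub>0 * ((cmod w)\<^sup>2 + (cmod (tau a \<theta> s - complex_of_real a))\<^sup>2)"
proof -
  define z where "z = tau a \<theta> s - complex_of_real a"
  obtain p q r t where pqr: "p \<ge> 0" "q \<ge> 0" "r \<ge> 0"
    "z\<^sup>2 = complex_of_real p + complex_of_real q * cis \<theta> + complex_of_real r * cis (2 * \<theta>)"
    "(cmod z)\<^sup>2 \<le> p + q + r"
    using zsq[OF assms(1), of \<theta> s] unfolding z_def by blast
  define \<phi> where "\<phi> = Arg w"
  define \<rho> where "\<rho> = (cmod w)\<^sup>2"
  define \<mu> where "\<mu> = (max (2*\<phi>) (2*\<theta>) + min (2*\<phi>) 0) / 2"
  define u where "u = w\<^sup>2 + z\<^sup>2"
  have u: "u = complex_of_real \<rho> * cis (2*\<phi>) + complex_of_real p * cis 0 + complex_of_real q * cis \<theta> + complex_of_real r * cis (2 * \<theta>)"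
    unfolding u_def pqr(4) \<rho>_def \<phi>_def w_sq[of w] by simp
  have d1: "\<bar>2*\<phi> - \<mu>\<bar> \<le> \<theta>\<^sub>0" "\<bar>0 - \<mu>\<bar> \<le> \<theta>\<^sub>0" "\<bar>\<theta> - \<mu>\<bar> \<le> \<theta>\<^sub>0" "\<bar>2*\<theta> - \<mu>\<bar> \<le> \<theta>\<^sub>0"
  proof -
    have "\<theta> \<le> \<theta>\<^sub>0" "0 < \<theta>" "\<theta> - \<theta>\<^sub>0 \<le> \<phi>" "\<phi> \<le> \<theta>\<^sub>0" using assms \<phi>_def by auto
    moreover have "\<mu> = (if \<phi> \<le> 0 then \<theta> + \<phi> else if \<phi> \<le> \<theta> then \<theta> else \<phi>)"
      unfolding \<mu>_def max_def min_def using \<open>0 < \<theta>\<close> by auto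
    ultimately have "\<bar>2*\<phi> - \<mu>\<bar> \<le> \<theta>\<^sub>0 \<and> \<bar>0 - \<mu>\<bar> \<le> \<theta>\<^sub>0 \<and> \<bar>\<theta> - \<mu>\<bar> \<le> \<theta>\<^sub>0 \<and> \<bar>2*\<theta> - \<mu>\<bar> \<le> \<theta>\<^sub>0"
      unfolding abs_le_iff
      by (cases "\<phi> \<le> 0"; cases "\<phi> \<le> \<theta>"; simp only: if_True if_False; intro conjI; linarith)
    thus "\<bar>2*\<phi> - \<mu>\<bar> \<le> \<theta>\<^sub>0" "\<bar>0 - \<mu>\<bar> \<le> \<theta>\<^sub>0" "\<bar>\<theta> - \<mu>\<bar> \<le> \<theta>\<^sub>0" "\<bar>2*\<theta> - \<mu>\<bar> \<le> \<theta>\<^sub>0"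
      by blast+
  qed
  have tp: "\<theta>\<^sub>0 \<le> pi" using assms by simp
  have c0: "cos \<theta>\<^sub>0 \<ge> 0" using assms by (intro cos_ge_zero) auto
  have "cos \<theta>\<^sub>0 * ((cmod w)\<^sup>2 + (cmod z)\<^sup>2) \<le> cos \<theta>\<^sub>0 * (\<rho> + p + q + r)"
    using pqr(5) c0 unfolding \<rho>_def by (intro mult_left_mono) auto
  also have "\<dots> = cos \<theta>\<^sub>0 * \<rho> + cos \<theta>\<^sub>0 * p + cos \<theta>\<^sub>0 * q + cos \<theta>\<^sub>0 * r" by (simp add: algebra_simps)
  also have "\<dots> \<le> Re (cis (-\<mu>) * (complex_of_real \<rho> * cis (2*\<phi>))) + Re (cis (-\<mu>) * (complex_of_real p * cis 0))
      + Re (cis (-\<mu>) * (complex_of_real q * cis \<theta>)) + Re (cis (-\<mu>) * (complex_of_real r * cis (2 * \<theta>)))"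
    using pqr d1 tp by (intro add_mono re_term) (auto simp: \<rho>_def)
  also have "\<dots> = Re (cis (-\<mu>) * u)" unfolding u distrib_left plus_complex.sel ..
  also have "\<dots> \<le> cmod u" by (rule cmod_ge_Re_rot)
  also have "cmod u = (cmod (R w z))\<^sup>2" unfolding R_def u_def by simp
  finally have "cos \<theta>\<^sub>0 * ((cmod w)\<^sup>2 + (cmod z)\<^sup>2) \<le> (cmod (R w z))\<^sup>2" .
  thus ?thesis by (simp only: z_def)
qed

theorem lemmaB5:
  fixes a \<theta> \<theta>\<^sub>0 :: real
  assumes "a > 0" and "0 < \<theta>" and "\<theta> < pi / 2"
    and "\<theta> \<le> \<theta>\<^sub>0" and "\<theta>\<^sub>0 < pi / 2"
  shows "(\<forall>w s. w \<noteq> 0 \<and> - \<theta>\<^sub>0 + \<theta> \<le> Arg w \<and> Arg w \<le> \<theta>\<^sub>0 \<longrightarrow>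
            (cmod (R w (tau a \<theta> s - complex_of_real a)))\<^sup>2
              \<ge> cos \<theta>\<^sub>0 * ((cmod w)\<^sup>2 + (cmod (tau a \<theta> s - complex_of_real a))\<^sup>2)
          \<and> cos \<theta>\<^sub>0 * ((cmod w)\<^sup>2 + (cmod (tau a \<theta> s - complex_of_real a))\<^sup>2)
              \<ge> (cos \<theta>\<^sub>0)\<^sup>2 * ((cmod w)\<^sup>2 + (cmod (tau a \<theta> s - complex_of_real a))\<^sup>2))
       \<and> (\<exists>C > 0. \<forall>s w. w \<noteq> 0 \<and> 0 \<le> Arg w \<and> Arg w \<le> \<theta> \<longrightarrow>
            Im (R w (tau a \<theta> s - complex_of_real a))
              \<ge> sqrt (cos (\<theta> - Arg w)) * Im w - C
          \<and> sqrt (cos (\<theta> - Arg w)) * Im w - C \<ge> cos (\<theta> - Arg w) * Im w - C)"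
proof (intro conjI allI impI)
  fix w s
  assume h: "w \<noteq> 0 \<and> - \<theta>\<^sub>0 + \<theta> \<le> Arg w \<and> Arg w \<le> \<theta>\<^sub>0"
  show "(cmod (R w (tau a \<theta> s - complex_of_real a)))\<^sup>2
              \<ge> cos \<theta>\<^sub>0 * ((cmod w)\<^sup>2 + (cmod (tau a \<theta> s - complex_of_real a))\<^sup>2)"
  proof -
    have h1: "w \<noteq> 0" "- \<theta>\<^sub>0 + \<theta> \<le> Arg w" "Arg w \<le> \<theta>\<^sub>0" using h by simp_all
    show ?thesis by (rule part1[OF assms h1])
  qed
  have c0: "cos \<theta>\<^sub>0 \<ge> 0" using assms by (intro cos_ge_zero) auto
  have c1: "cos \<theta>\<^sub>0 \<le> 1" by simp
  have "(cos \<theta>\<^sub>0)\<^sup>2 \<le> cos \<theta>\<^sub>0" using c0 c1 by (simp add: power2_eq_square mult_left_le)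
  thus "cos \<theta>\<^sub>0 * ((cmod w)\<^sup>2 + (cmod (tau a \<theta> s - complex_of_real a))\<^sup>2)
              \<ge> (cos \<theta>\<^sub>0)\<^sup>2 * ((cmod w)\<^sup>2 + (cmod (tau a \<theta> s - complex_of_real a))\<^sup>2)"
    by (intro mult_right_mono) auto
next
  define K where "K = 4*a\<^sup>2 + 4*a + 1"
  define C where "C = 2*a + K + K / sqrt (cos \<theta>)"
  have ct: "cos \<theta> > 0" using assms by (intro cos_gt_zero_pi) auto
  have K1: "K \<ge> 1" unfolding K_def using assms by simp
  have C0: "C > 0" unfolding C_def using assms K1 ct by (simp add: add_pos_nonneg)
  show "\<exists>C > 0. \<forall>s w. w \<noteq> 0 \<and> 0 \<le> Arg w \<and> Arg w \<le> \<theta> \<longrightarrow>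
            Im (R w (tau a \<theta> s - complex_of_real a))
              \<ge> sqrt (cos (\<theta> - Arg w)) * Im w - C
          \<and> sqrt (cos (\<theta> - Arg w)) * Im w - C \<ge> cos (\<theta> - Arg w) * Im w - C"
  proof (intro exI[of _ C] conjI C0 allI impI)
    fix s w
    assume h: "w \<noteq> 0 \<and> 0 \<le> Arg w \<and> Arg w \<le> \<theta>"
    define z where "z = tau a \<theta> s - complex_of_real a"
    obtain p q r t where pqr: "p \<ge> 0" "q \<ge> 0" "r \<ge> 0" "t \<ge> 0"
      "z\<^sup>2 = complex_of_real p + complex_of_real q * cis \<theta> + complex_of_real r * cis (2 * \<theta>)"
      "cmod (z\<^sup>2 - complex_of_real (t\<^sup>2) * cis (2 * \<theta>)) \<le> 4 * a\<^sup>2 + 4 * a * t"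
      using zsq[OF assms(1), of \<theta> s] unfolding z_def by blast
    define \<phi> where "\<phi> = Arg w"
    define \<delta> where "\<delta> = \<theta> - \<phi>"
    define y0 where "y0 = w\<^sup>2 + complex_of_real (t\<^sup>2) * cis (2 * \<theta>)"
    define x where "x = w\<^sup>2 + z\<^sup>2"
    have L: "Im y0 \<ge> 0" "cmod y0 \<ge> cos \<delta> * ((cmod w)\<^sup>2 + t\<^sup>2)" "Im (csqrt y0) \<ge> sqrt (cos \<delta>) * Im w"
      using L1[of w \<theta> t] h assms pqr(4) unfolding y0_def \<delta>_def \<phi>_def by auto
    have s1: "sin (2*\<phi>) \<ge> 0" using h assms \<phi>_def by (intro sin_ge_zero) auto
    have s2: "sin (2*\<theta>) \<ge> 0" using assms by (intro sin_ge_zero) auto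
    have s3: "sin \<theta> \<ge> 0" using assms by (intro sin_ge_zero) auto
    have "Im x = (cmod w)\<^sup>2 * sin (2*\<phi>) + q * sin \<theta> + r * sin (2*\<theta>)"
      unfolding x_def pqr(5) \<phi>_def w_sq[of w] by simp
    hence Ix: "Im x \<ge> 0" using s1 s2 s3 pqr by simp
    define M where "M = 4 * a\<^sup>2 + 4 * a * t"
    have xy: "cmod (x - y0) \<le> M" unfolding x_def y0_def M_def using pqr(6) by simp
    define d where "d = cmod (csqrt x - csqrt y0)"
    have P1: "d\<^sup>2 \<le> M" using pert(1)[OF Ix L(1)] xy unfolding d_def by linarith
    have P2: "d * cmod (csqrt y0) \<le> M" using pert(2)[OF Ix L(1)] xy unfolding d_def by linarith
    have d0: "d \<ge> 0" unfolding d_def by simp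
    have kq: "K / sqrt (cos \<theta>) \<ge> 0" using K1 ct by simp
    have dC: "d \<le> C"
    proof (cases "t \<le> 1")
      case True
      have "4*a*t \<le> 4*a" using mult_left_le[of t "4*a"] True assms by simp
      hence "M \<le> K" unfolding M_def K_def by simp
      also have "K \<le> K\<^sup>2" using K1 by (simp add: power2_eq_square)
      finally have MK: "M \<le> K\<^sup>2" .
      have "d\<^sup>2 \<le> K\<^sup>2" using P1 MK by (rule order.trans)
      hence "d \<le> K" by (rule power2_le_imp_le) (use K1 in simp)
      thus ?thesis unfolding C_def using assms kq by linarith
    next
      case False
      have cd: "cos \<theta> \<le> cos \<delta>" using h assms unfolding \<delta>_def \<phi>_def
        by (subst cos_mono_le_eq) auto
      have cdp: "cos \<delta> \<ge> 0" using h assms unfolding \<delta>_def \<phi>_def by (intro cos_ge_zero) auto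
      have "cos \<theta> * t\<^sup>2 \<le> cos \<delta> * t\<^sup>2" using cd by (simp add: mult_right_mono)
      also have "\<dots> \<le> cos \<delta> * ((cmod w)\<^sup>2 + t\<^sup>2)" using cdp by (simp add: mult_left_mono)
      also have "\<dots> \<le> cmod y0" by (rule L(2))
      finally have "sqrt (cos \<theta> * t\<^sup>2) \<le> sqrt (cmod y0)" by (rule real_sqrt_le_mono)
      hence sy: "sqrt (cos \<theta>) * t \<le> cmod (csqrt y0)" using pqr(4) by (simp add: real_sqrt_mult)
      have "d * (sqrt (cos \<theta>) * t) \<le> d * cmod (csqrt y0)" using sy d0 by (rule mult_left_mono)
      also have "\<dots> \<le> M" by (rule P2)
      also have "M \<le> K * t"
      proof -
        have "4*a\<^sup>2 * 1 \<le> 4*a\<^sup>2 * t" using False by (intro mult_left_mono) auto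
        thus ?thesis unfolding M_def K_def using False by (simp add: algebra_simps)
      qed
      finally have "(d * sqrt (cos \<theta>)) * t \<le> K * t" by (simp add: mult_ac)
      hence "d * sqrt (cos \<theta>) \<le> K" using False by simp
      hence "d \<le> K / sqrt (cos \<theta>)" using ct by (simp add: pos_le_divide_eq)
      thus ?thesis unfolding C_def using assms K1 by linarith
    qed
    have "Im (csqrt x) = Im (csqrt y0) + Im (csqrt x - csqrt y0)" by simp
    moreover have "Im (csqrt x - csqrt y0) \<ge> - d" unfolding d_def using abs_Im_le_cmod[of "csqrt x - csqrt y0"] by linarith
    ultimately have "Im (csqrt x) \<ge> sqrt (cos \<delta>) * Im w - C" using L(3) dC by linarith
    thus "Im (R w (tau a \<theta> s - complex_of_real a)) \<ge> sqrt (cos (\<theta> - Arg w)) * Im w - C"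
      unfolding R_def x_def z_def \<delta>_def \<phi>_def .
    have cdp: "cos \<delta> \<ge> 0" using h assms unfolding \<delta>_def \<phi>_def by (intro cos_ge_zero) auto
    have "sqrt (cos \<delta>) \<le> 1" by simp
    have "cos \<delta> = sqrt (cos \<delta>) * sqrt (cos \<delta>)" using cdp by simp
    also have "\<dots> \<le> sqrt (cos \<delta>) * 1" using \<open>sqrt (cos \<delta>) \<le> 1\<close> using cdp by (intro mult_left_mono) auto
    finally have "cos \<delta> \<le> sqrt (cos \<delta>)" by simp
    moreover have "Im w \<ge> 0" unfolding Im_w[of w] using h assms by (intro mult_nonneg_nonneg sin_ge_zero) auto
    ultimately have "cos \<delta> * Im w \<le> sqrt (cos \<delta>) * Im w" by (rule mult_right_mono)
    thus "sqrt (cos (\<theta> - Arg w)) * Im w - C \<ge> cos (\<theta> - Arg w) * Im w - C"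
      unfolding \<delta>_def \<phi>_def by simp
  qed
qed

end
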